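(* Fix $\lambda\in[0,1)$, $p\in[0,1]$, $T>0$, and consider the coupled construction below on $\Omega=\Omega_W\times\Omega_U\times\Omega_0$. Let $\mathcal{C}$ be the set of $\omega\in\Omega$ such that $\lim_{N\to\infty}\sup_{t\in[0,T]}|W^N(\omega,t)-(1+\lambda)t|=0$ and $\lim_{N\to\infty}\frac1N\sum_{k=1}^N\mathbb{I}_{[a,b)}(U(\omega,k))=b-a$ for every $[a,b)\subset[0,1]$ with $a<b$. Assume there is $\mathbf{v}^0\in\overline{\mathcal{V}}^\infty$ such that $\lim_{N\to\infty}\|\mathbf{V}^N(\omega,0)-\mathbf{v}^0\|_w=0$ for all $\omega\in\mathcal{C}$. Then for every $\omega\in\mathcal{C}$, every subsequence of $(\mathbf{X}^N(\omega,\cdot))_{N\ge1}$ has a further subsequence $(\mathbf{X}^{N_i}(\omega,\cdot))$ converging to some $\mathbf{x}=(\mathbf{v},\mathbf{a},\mathbf{l},\mathbf{c})$, in the sense that $d^{\mathbb{Z}_+}(\mathbf{V}^{N_i},\mathbf{v})$, $d^{\mathbb{Z}_+}(\mathbf{A}^{N_i},\mathbf{a})$, $d^{\mathbb{Z}_+}(\mathbf{L}^{N_i},\mathbf{l})$, $d^{\mathbb{Z}_+}(\mathbf{C}^{N_i},\mathbf{c})$ all tend to $0$ as $i\to\infty$; moreover $\mathbf{v}(0)=\mathbf{v}^0$, $\mathbf{a}(0)=\mathbf{l}(0)=\mathbf{c}(0)=0$, and every scalar coordinate $\mathbf{x}_j$ of $\mathbf{x}$ satisfies $|\mathbf{x}_j(a)-\mathbf{x}_j(b)|\le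 L|a-b|$ for all $a,b\in[0,T]$, where $L>0$ is a constant independent of $\omega$, $\mathbf{x}$ and $T$.
   Context: $\mathcal{S}=\{\mathbf{s}\in[0,1]^{\mathbb{Z}_+}:1=\mathbf{s}_0\ge\mathbf{s}_1\ge\cdots\ge0\}$, $\overline{\mathcal{S}}^\infty=\{\mathbf{s}\in\mathcal{S}:\sum_{i\ge1}\mathbf{s}_i<\infty\}$, $\overline{\mathcal{V}}^\infty=\{\mathbf{v}:\mathbf{v}_i=\sum_{j\ge i}\mathbf{s}_j\ \forall i,\text{ for some }\mathbf{s}\in\overline{\mathcal{S}}^\infty\}$; $\|\mathbf{x}\|_w^2=\sum_{i\ge0}2^{-i}\mathbf{x}_i^2$; for $\mathbb{R}^{\mathbb{Z}_+}$-valued functions on $[0,T]$, $d^{\mathbb{Z}_+}(\mathbf{x},\mathbf{y})=\sup_{t\in[0,T]}\|\mathbf{x}(t)-\mathbf{y}(t)\|_w$. Coupled construction: on $(\Omega_W,\mathcal{F}_W,\mathbb{P}_W)$ let $W$ be a Poisson process of rate $1+\lambda$; on $(\Omega_U,\mathcal{F}_U,\mathbb{P}_U)$ let $U(k)$, $k\ge1$, be i.i.d. uniform on $[0,1]$; on $(\Omega_0,\mathcal{F}_0,\mathbb{P}_0)$ let $\mathbf{V}^{(0,N)}$, $N\ge1$, be random variables with values in $\overline{\mathcal{V}}^\infty$ whose coordinates are integer multiples of $1/N$; take the product space $\Omega$. Set $W^N(t)=W(Nt)/N$ and let $t_k$ be the $k$-th jump time of $W^N$. Put $\mathbf{V}^N(0)=\mathbf{V}^{(0,N)}$;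 the processes $\mathbf{A}^N_i,\mathbf{L}^N_i,\mathbf{C}^N_i$ ($i\ge1$) start at $0$ and are constant between jump times; at $t_k$: for each $i\ge1$ with $U(k)\in\frac{\lambda}{1+\lambda}[0,\mathbf{V}^N_{i-1}(t_k-)-\mathbf{V}^N_i(t_k-))$, $\mathbf{A}^N_i$ increases by $1/N$; for each $i\ge1$ with $U(k)\in\frac{\lambda}{1+\lambda}+\frac{1-p}{1+\lambda}[0,\mathbf{V}^N_i(t_k-)-\mathbf{V}^N_{i+1}(t_k-))$, $\mathbf{L}^N_i$ increases by $1/N$; if $U(k)\in[1-\frac{p}{1+\lambda},1)$, $\mathbf{C}^N_j$ increases by $1/N$ for all $1\le j\le \sup\{i:\mathbf{V}^N_i(t_k-)>0\}$. Then $\mathbf{V}^N_i(t)=\mathbf{V}^N_i(0)+\mathbf{A}^N_i(t)-\mathbf{L}^N_i(t)-\mathbf{C}^N_i(t)$ for $i\ge1$ and $\mathbf{V}^N_0=\mathbf{V}^N_1+1$. (This realizes the aggregate queue-length process of an $N$-station system with Poisson($\lambda$) arrivals per station, local service tokens of rate $1-p$ per station, and central service tokens of rate $Np$ serving a longest queue.) $\mathbf{X}^N=(\mathbf{V}^N,\mathbf{A}^N,\mathbf{L}^N,\mathbf{C}^N)$. *)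

theory Defs
  imports Complex_Main
begin

type_synonym seq = "nat \<Rightarrow> real"
type_synonym state = "seq \<times> seq \<times> seq \<times> seq"

definition Sset :: "seq set" where
  "Sset = {s. s 0 = 1 \<and> (\<forall>i. 0 \<le> s i \<and> s i \<le> 1) \<and> (\<forall>i. s (Suc i) \<le> s i)}"

definition Sbar_inf :: "seq set" where
  "Sbar_inf = {s \<in> Sset. summable (\<lambda>i. s (Suc i))}"

definition Vbar_inf :: "seq set" where
  "Vbar_inf = {v. \<exists>s\<in>Sbar_inf. \<forall>i. v i = (\<Sum>j. s (j + i))}"

definition wnorm :: "seq \<Rightarrow> real" where
  "wnorm x = sqrt (\<Sum>i. (1/2) ^ i * (x i)\<^sup>2)"

definition dZ :: "real \<Rightarrow> (real \<Rightarrow> seq) \<Rightarrow> (real \<Rightarrow> seq) \<Rightarrow> real" where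
  "dZ T x y = (SUP t\<in>{0..T}. wnorm (x t - y t))"

definition arr_ev :: "real \<Rightarrow> nat \<Rightarrow> real \<Rightarrow> seq \<Rightarrow> seq" where
  "arr_ev lam N u V i =
     (if 1 \<le> i \<and> 0 \<le> u \<and> u < lam / (1 + lam) * (V (i - 1) - V i) then 1 / real N else 0)"

definition loc_ev :: "real \<Rightarrow> real \<Rightarrow> nat \<Rightarrow> real \<Rightarrow> seq \<Rightarrow> seq" where
  "loc_ev lam p N u V i =
     (if 1 \<le> i \<and> lam / (1 + lam) \<le> u \<and>
         u < lam / (1 + lam) + (1 - p) / (1 + lam) * (V i - V (Suc i)) then 1 / real N else 0)"

definition cen_ev :: "real \<Rightarrow> real \<Rightarrow> nat \<Rightarrow> real \<Rightarrow> seq \<Rightarrow> seq" where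
  "cen_ev lam p N u V i =
     (if 1 \<le> i \<and> 1 - p / (1 + lam) \<le> u \<and> u < 1 \<and> (\<exists>j\<ge>i. 0 < V j) then 1 / real N else 0)"

definition step :: "real \<Rightarrow> real \<Rightarrow> nat \<Rightarrow> real \<Rightarrow> state \<Rightarrow> state" where
  "step lam p N u x =
     (case x of (V, A, L, C) \<Rightarrow>
       let a = arr_ev lam N u V; l = loc_ev lam p N u V; c = cen_ev lam p N u V;
           V1 = (\<lambda>i. V i + a i - l i - c i)
       in ((\<lambda>i. if i = 0 then V1 1 + 1 else V1 i),
           (\<lambda>i. A i + a i), (\<lambda>i. L i + l i), (\<lambda>i. C i + c i)))"

text \<open>State after the first k events (event k uses the mark U k, k \<ge> 1).\<close>
fun chain :: "real \<Rightarrow> real \<Rightarrow> nat \<Rightarrow> seq \<Rightarrow> (nat \<Rightarrow> real) \<Rightarrow> nat \<Rightarrow> state" where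
  "chain lam p N V0 U 0 = (V0, (\<lambda>_. 0), (\<lambda>_. 0), (\<lambda>_. 0))"
| "chain lam p N V0 U (Suc k) = step lam p N (U (Suc k)) (chain lam p N V0 U k)"

text \<open>A Poisson path is given by its jump times tau 1 < tau 2 < ... (tending to infinity).\<close>
definition jump_times :: "(nat \<Rightarrow> real) \<Rightarrow> bool" where
  "jump_times tau \<longleftrightarrow> (\<forall>k\<ge>1. 0 < tau k \<and> tau k < tau (Suc k)) \<and> filterlim tau at_top sequentially"

definition Wpath :: "(nat \<Rightarrow> real) \<Rightarrow> real \<Rightarrow> real" where
  "Wpath tau s = real (card {k. 1 \<le> k \<and> tau k \<le> s})"

definition WN :: "(nat \<Rightarrow> real) \<Rightarrow> nat \<Rightarrow> real \<Rightarrow> real" where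
  "WN tau N t = Wpath tau (real N * t) / real N"

definition XN :: "real \<Rightarrow> real \<Rightarrow> (nat \<Rightarrow> real) \<Rightarrow> (nat \<Rightarrow> real) \<Rightarrow> (nat \<Rightarrow> seq)
                   \<Rightarrow> nat \<Rightarrow> real \<Rightarrow> state" where
  "XN lam p tau U V0 N t = chain lam p N (V0 N) U (card {k. 1 \<le> k \<and> tau k \<le> real N * t})"

definition Xproc :: "real \<Rightarrow> real \<Rightarrow> ('w \<Rightarrow> nat \<Rightarrow> real) \<Rightarrow> ('u \<Rightarrow> nat \<Rightarrow> real)
                   \<Rightarrow> ('z \<Rightarrow> nat \<Rightarrow> seq) \<Rightarrow> 'w \<times> 'u \<times> 'z \<Rightarrow> nat \<Rightarrow> real \<Rightarrow> state" where
  "Xproc lam p tau U V0 \<omega> N t =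
     (case \<omega> of (w, u, z) \<Rightarrow> XN lam p (tau w) (U u) (V0 z) N t)"

definition Vc :: "state \<Rightarrow> seq" where "Vc x = fst x"
definition Ac :: "state \<Rightarrow> seq" where "Ac x = fst (snd x)"
definition Lc :: "state \<Rightarrow> seq" where "Lc x = fst (snd (snd x))"
definition Cc :: "state \<Rightarrow> seq" where "Cc x = snd (snd (snd x))"

definition Cset :: "real \<Rightarrow> real \<Rightarrow> ('w \<Rightarrow> nat \<Rightarrow> real) \<Rightarrow> ('u \<Rightarrow> nat \<Rightarrow> real)
                    \<Rightarrow> ('w \<times> 'u \<times> 'z) set" where
  "Cset lam T tau U = {(w, u, z).
      (\<lambda>N. SUP t\<in>{0..T}. \<bar>WN (tau w) N t - (1 + lam) * t\<bar>) \<longlonglongrightarrow> 0 \<and>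
      (\<forall>a b. 0 \<le> a \<and> a < b \<and> b \<le> 1 \<longrightarrow>
         (\<lambda>N. (\<Sum>k=1..N. if a \<le> U u k \<and> U u k < b then 1 else 0) / real N) \<longlonglongrightarrow> b - a)}"

end

theory Submission
  imports Defs "HOL-Library.Diagonal_Subsequence" "HOL-Analysis.Analysis"
begin


lemma diag_bounded:
  fixes x :: "nat \<Rightarrow> nat \<Rightarrow> real"
  assumes B: "\<And>m. \<exists>B. \<forall>n. \<bar>x m n\<bar> \<le> B"
  shows "\<exists>s. strict_mono s \<and> (\<forall>m. convergent (\<lambda>i. x m (s i)))"
proof -
  interpret subseqs "\<lambda>m r. convergent (\<lambda>i. x m (r i))"
  proof
    fix m and s :: "nat \<Rightarrow> nat" assume "strict_mono s"
    obtain C where C: "\<forall>n. \<bar>x m n\<bar> \<le> C" using B by blast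
    have "bounded (range (\<lambda>i. x m (s i)))"
      unfolding bounded_iff using C by auto
    then obtain l r where "strict_mono r" "((\<lambda>i. x m (s i)) \<circ> r) \<longlonglongrightarrow> l"
      using bounded_imp_convergent_subsequence by blast
    then show "\<exists>r'. strict_mono r' \<and> convergent (\<lambda>i. x m ((s \<circ> r') i))"
      by (auto simp: convergent_def o_def)
  qed
  have "convergent (\<lambda>i. x m (diagseq i))" for m
  proof -
    have "convergent (\<lambda>i. x m ((diagseq \<circ> (+) (Suc m)) i))"
      by (rule diagseq_holds) (auto dest: convergent_subseq_convergent simp: o_def)
    then obtain l where "(\<lambda>i. x m (diagseq (i + Suc m))) \<longlonglongrightarrow> l"
      by (auto simp: convergent_def o_def add.commute)
    then have "(\<lambda>i. x m (diagseq i)) \<longlonglongrightarrow> l" by (rule LIMSEQ_offset)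
    then show ?thesis by (auto simp: convergent_def)
  qed
  then show ?thesis using subseq_diagseq by blast
qed



lemma grid_pt:
  assumes T: "T > 0" and t: "0 \<le> t" "t \<le> T"
  shows "\<exists>k\<le>Suc M. \<bar>t - real k * T / real (Suc M)\<bar> \<le> T / real (Suc M)"
proof -
  define z where "z = t * real (Suc M) / T"
  have z0: "0 \<le> z" using T t by (simp add: z_def)
  have zM: "z \<le> real (Suc M)" using T t mult_right_mono[OF t(2), of "real (Suc M)"] by (simp add: z_def field_simps)
  define k where "k = nat \<lfloor>z\<rfloor>"
  have kz: "real k \<le> z" "z < real k + 1" using z0 by (auto simp: k_def)
  have "k \<le> Suc M" using kz zM by linarith
  moreover have "t = z * T / real (Suc M)" using T by (simp add: z_def)
  then have "t - real k * T / real (Suc M) = (z - real k) * (T / real (Suc M))"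
    by (simp add: field_simps)
  moreover have "\<bar>z - real k\<bar> * (T / real (Suc M)) \<le> 1 * (T / real (Suc M))"
    using kz T by (intro mult_right_mono) auto
  then have "\<bar>(z - real k) * (T / real (Suc M))\<bar> \<le> 1 * (T / real (Suc M))"
    using T by (simp add: abs_mult)
  ultimately show ?thesis by (intro exI[of _ k]) auto
qed

lemma unif_from_grid:
  fixes f :: "nat \<Rightarrow> real \<Rightarrow> real"
  assumes T: "T > 0" and K: "K \<ge> 0" and e: "e \<longlonglongrightarrow> 0"
    and lip: "\<And>n x y. x\<in>{0..T} \<Longrightarrow> y\<in>{0..T} \<Longrightarrow> \<bar>f n x - f n y\<bar> \<le> K*\<bar>x-y\<bar> + e n"
    and conv: "\<And>M k. k \<le> Suc M \<Longrightarrow> convergent (\<lambda>n. f n (real k * T / real (Suc M)))"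
  shows "\<exists>g. (\<forall>t\<in>{0..T}. (\<lambda>n. f n t) \<longlonglongrightarrow> g t) \<and>
             (\<forall>\<epsilon>>0. \<exists>N0. \<forall>n\<ge>N0. \<forall>t\<in>{0..T}. \<bar>f n t - g t\<bar> \<le> \<epsilon>) \<and>
             (\<forall>x\<in>{0..T}. \<forall>y\<in>{0..T}. \<bar>g x - g y\<bar> \<le> K*\<bar>x-y\<bar>)"
proof -
  have ucau: "\<exists>N0. \<forall>n\<ge>N0. \<forall>m\<ge>N0. \<forall>t\<in>{0..T}. \<bar>f n t - f m t\<bar> \<le> \<epsilon>" if eps: "\<epsilon> > 0" for \<epsilon>
  proof -
    obtain M where M: "real (Suc M) > 5 * (K+1) * T / \<epsilon>"
      using reals_Archimedean2 by (metis less_Suc_eq of_nat_less_iff order_less_trans)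
    define \<delta> where "\<delta> = T / real (Suc M)"
    have "5 * (K+1) * T < \<epsilon> * real (Suc M)" using M eps by (simp add: field_simps)
    then have "5 * ((K+1) * \<delta>) < \<epsilon>" using T by (simp add: \<delta>_def field_simps)
    moreover have "K * \<delta> \<le> (K+1) * \<delta>" using T by (intro mult_right_mono) (auto simp: \<delta>_def)
    ultimately have Kd: "K * \<delta> < \<epsilon> / 5" by linarith
    define p where "p k = real k * T / real (Suc M)" for k
    define L where "L k = lim (\<lambda>n. f n (p k))" for k
    have Lk: "(\<lambda>n. f n (p k)) \<longlonglongrightarrow> L k" if "k \<le> Suc M" for k
      using conv[OF that] by (simp add: L_def p_def convergent_LIMSEQ_iff)
    have ev1: "eventually (\<lambda>n. \<forall>k\<in>{..Suc M}. \<bar>f n (p k) - L k\<bar> < \<epsilon>/10) sequentially"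
    proof (rule eventually_ball_finite)
      show "\<forall>k\<in>{..Suc M}. eventually (\<lambda>n. \<bar>f n (p k) - L k\<bar> < \<epsilon>/10) sequentially"
      proof
        fix k assume "k \<in> {..Suc M}"
        then have "(\<lambda>n. f n (p k)) \<longlonglongrightarrow> L k" using Lk by auto
        then have "eventually (\<lambda>n. dist (f n (p k)) (L k) < \<epsilon>/10) sequentially"
          using eps by (intro tendstoD) auto
        then show "eventually (\<lambda>n. \<bar>f n (p k) - L k\<bar> < \<epsilon>/10) sequentially"
          by (simp add: dist_real_def)
      qed
    qed auto
    have ev2: "eventually (\<lambda>n. \<bar>e n\<bar> < \<epsilon>/5) sequentially"
      using tendstoD[OF e, of "\<epsilon>/5"] eps by (simp add: dist_real_def)
    obtain N0 where N0: "\<And>n. n \<ge> N0 \<Longrightarrow> (\<forall>k\<in>{..Suc M}. \<bar>f n (p k) - L k\<bar> < \<epsilon>/10) \<and> \<bar>e n\<bar> < \<epsilon>/5"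
      using eventually_conj[OF ev1 ev2] unfolding eventually_sequentially by blast
    have pk: "p k \<in> {0..T}" if "k \<le> Suc M" for k
    proof -
      have "real k * T \<le> real (Suc M) * T" using that T by (intro mult_right_mono) auto
      then show ?thesis using T by (auto simp: p_def pos_divide_le_eq mult.commute)
    qed
    show ?thesis
    proof (intro exI[of _ N0] allI impI ballI)
      fix n m t assume n: "n \<ge> N0" and m: "m \<ge> N0" and t: "t \<in> {0..T}"
      obtain k where k: "k \<le> Suc M" "\<bar>t - p k\<bar> \<le> \<delta>"
        using grid_pt[OF T, of t M] t by (auto simp: p_def \<delta>_def)
      have Kt: "K * \<bar>t - p k\<bar> \<le> K * \<delta>" using k K by (intro mult_left_mono) auto
      have a1: "\<bar>f n t - f n (p k)\<bar> \<le> K * \<bar>t - p k\<bar> + e n" using lip[OF t pk[OF k(1)]] .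
      have a2: "\<bar>f m t - f m (p k)\<bar> \<le> K * \<bar>t - p k\<bar> + e m" using lip[OF t pk[OF k(1)]] .
      have a3: "\<bar>f n (p k) - L k\<bar> < \<epsilon>/10" "\<bar>f m (p k) - L k\<bar> < \<epsilon>/10" "\<bar>e n\<bar> < \<epsilon>/5" "\<bar>e m\<bar> < \<epsilon>/5"
        using N0[OF n] N0[OF m] k(1) by auto
      show "\<bar>f n t - f m t\<bar> \<le> \<epsilon>" using a1 a2 a3 Kt Kd by linarith
    qed
  qed
  have cau: "Cauchy (\<lambda>n. f n t)" if t: "t \<in> {0..T}" for t
  proof (rule metric_CauchyI)
    fix \<epsilon> :: real assume "\<epsilon> > 0"
    then obtain N0 where N0: "\<forall>n\<ge>N0. \<forall>m\<ge>N0. \<forall>t\<in>{0..T}. \<bar>f n t - f m t\<bar> \<le> \<epsilon>/2"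
      using ucau[of "\<epsilon>/2"] by auto
    show "\<exists>M. \<forall>m\<ge>M. \<forall>n\<ge>M. dist (f m t) (f n t) < \<epsilon>"
    proof (intro exI[of _ N0] allI impI)
      fix m n assume "m \<ge> N0" "n \<ge> N0"
      then have "\<bar>f m t - f n t\<bar> \<le> \<epsilon>/2" using N0 t by blast
      then show "dist (f m t) (f n t) < \<epsilon>" using \<open>\<epsilon> > 0\<close> by (simp add: dist_real_def)
    qed
  qed
  define g where "g t = lim (\<lambda>n. f n t)" for t
  have gl: "(\<lambda>n. f n t) \<longlonglongrightarrow> g t" if "t \<in> {0..T}" for t
    using cau[OF that] by (simp add: g_def Cauchy_convergent_iff convergent_LIMSEQ_iff)
  have unif: "\<exists>N0. \<forall>n\<ge>N0. \<forall>t\<in>{0..T}. \<bar>f n t - g t\<bar> \<le> \<epsilon>" if "\<epsilon> > 0" for \<epsilon>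
  proof -
    obtain N0 where N0: "\<forall>n\<ge>N0. \<forall>m\<ge>N0. \<forall>t\<in>{0..T}. \<bar>f n t - f m t\<bar> \<le> \<epsilon>"
      using ucau[of \<epsilon>] \<open>0 < \<epsilon>\<close> by blast
    show ?thesis
    proof (intro exI[of _ N0] allI impI ballI)
      fix n t assume n: "n \<ge> N0" and t: "t \<in> {0..T}"
      have "(\<lambda>m. \<bar>f n t - f m t\<bar>) \<longlonglongrightarrow> \<bar>f n t - g t\<bar>"
        by (intro tendsto_intros gl t)
      then show "\<bar>f n t - g t\<bar> \<le> \<epsilon>"
        by (rule LIMSEQ_le_const2) (use N0 n t in blast)
    qed
  qed
  have lipg: "\<bar>g x - g y\<bar> \<le> K*\<bar>x-y\<bar>" if x: "x\<in>{0..T}" and y: "y\<in>{0..T}" for x y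
  proof -
    have "(\<lambda>n. \<bar>f n x - f n y\<bar>) \<longlonglongrightarrow> \<bar>g x - g y\<bar>" by (intro tendsto_intros gl x y)
    moreover have "(\<lambda>n. K*\<bar>x-y\<bar> + e n) \<longlonglongrightarrow> K*\<bar>x-y\<bar>"
      using tendsto_add[OF tendsto_const e, of "K*\<bar>x-y\<bar>"] by simp
    ultimately show ?thesis by (rule LIMSEQ_le) (use lip x y in auto)
  qed
  show ?thesis using gl unif lipg by blast
qed



lemma wnorm_small:
  fixes x :: seq
  assumes D: "\<And>i. \<bar>x i\<bar> \<le> D" and eta: "\<And>i. i < M \<Longrightarrow> \<bar>x i\<bar> \<le> \<eta>"
  shows "0 \<le> wnorm x \<and> wnorm x \<le> sqrt (2*\<eta>^2 + 2 * D^2 * (1/2)^M)"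
proof -
  define f where "f i = (1/2::real) ^ i * (x i)\<^sup>2" for i
  have f0: "0 \<le> f i" for i by (simp add: f_def)
  have geo: "(\<lambda>i. (1/2::real)^i) sums 2"
    using geometric_sums[of "1/2::real"] by simp
  have fD: "f i \<le> D^2 * (1/2)^i" for i
  proof -
    have "(x i)\<^sup>2 \<le> D\<^sup>2" using D[of i] by (metis abs_le_square_iff abs_of_nonneg abs_ge_zero order_trans)
    then show ?thesis unfolding f_def by (simp add: mult.commute)
  qed
  have sD: "summable (\<lambda>i. D^2 * (1/2::real)^i)" using geo by (intro summable_mult) (auto simp: sums_iff)
  have sf: "summable f"
    by (rule summable_comparison_test[OF _ sD]) (use f0 fD in auto)
  have split: "suminf f = (\<Sum>n. f (n + M)) + (\<Sum>i<M. f i)"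
    using suminf_split_initial_segment[OF sf] .
  have sfM: "summable (\<lambda>n. f (n + M))" using sf by (simp add: summable_iff_shift)
  have s1: "(\<Sum>n. f (n + M)) \<le> (\<Sum>n. D^2 * (1/2)^M * (1/2)^n)"
  proof (rule suminf_le)
    show "f (n + M) \<le> D^2 * (1/2)^M * (1/2)^n" for n using fD[of "n+M"] by (simp add: power_add mult_ac)
    show "summable (\<lambda>n. D^2 * (1/2::real)^M * (1/2)^n)" using geo by (intro summable_mult) (auto simp: sums_iff)
  qed (rule sfM)
  have "(\<Sum>n. D^2 * (1/2::real)^M * (1/2)^n) = D^2 * (1/2)^M * 2"
    using geo by (subst suminf_mult) (auto simp: sums_iff)
  with s1 have s1': "(\<Sum>n. f (n + M)) \<le> 2 * D^2 * (1/2)^M" by simp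
  have fe: "f i \<le> \<eta>^2 * (1/2)^i" if "i < M" for i
  proof -
    have "(x i)\<^sup>2 \<le> \<eta>\<^sup>2" using eta[OF that] by (metis abs_le_square_iff abs_of_nonneg abs_ge_zero order_trans)
    then show ?thesis unfolding f_def by (simp add: mult.commute)
  qed
  have "(\<Sum>i<M. f i) \<le> (\<Sum>i<M. \<eta>^2 * (1/2)^i)" using fe by (intro sum_mono) auto
  also have "\<dots> \<le> (\<Sum>i. \<eta>^2 * (1/2::real)^i)"
    using geo by (intro sum_le_suminf) (auto simp: sums_iff intro!: summable_mult)
  also have "\<dots> = 2 * \<eta>^2" using geo by (subst suminf_mult) (auto simp: sums_iff)
  finally have s2: "(\<Sum>i<M. f i) \<le> 2 * \<eta>^2" .
  have "0 \<le> suminf f" using sf f0 by (rule suminf_nonneg)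
  moreover have "suminf f \<le> 2*\<eta>^2 + 2 * D^2 * (1/2)^M" using split s1' s2 by linarith
  ultimately show ?thesis unfolding wnorm_def f_def[symmetric] by auto
qed

lemma dZ_tendsto:
  fixes F :: "nat \<Rightarrow> real \<Rightarrow> seq" and G :: "real \<Rightarrow> seq"
  assumes T: "T \<ge> 0"
    and D: "\<And>n t j. t \<in> {0..T} \<Longrightarrow> \<bar>F n t j - G t j\<bar> \<le> D"
    and U: "\<And>j \<epsilon>. \<epsilon> > 0 \<Longrightarrow> \<exists>N0. \<forall>n\<ge>N0. \<forall>t\<in>{0..T}. \<bar>F n t j - G t j\<bar> \<le> \<epsilon>"
  shows "(\<lambda>n. dZ T (F n) G) \<longlonglongrightarrow> 0"
proof (rule LIMSEQ_I)
  fix r :: real assume r: "r > 0"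
  have D0: "0 \<le> D" using D[of 0 0 0] T by (metis abs_ge_zero atLeastAtMost_iff order_refl order_trans)
  obtain M where M: "(1/2::real)^M < r^2 / (8 * (D^2 + 1))"
  proof -
    have "0 < r^2 / (8 * (D^2 + 1))" using r by (intro divide_pos_pos) (auto intro: add_nonneg_pos)
    then show ?thesis using real_arch_pow_inv[of "r^2 / (8 * (D^2 + 1))" "1/2::real"] that by auto
  qed
  have MD: "2 * D^2 * (1/2)^M \<le> r^2/4"
  proof -
    have "2 * D^2 * (1/2::real)^M \<le> 2 * (D^2+1) * (1/2)^M" by (intro mult_right_mono) auto
    also have "\<dots> \<le> 2 * (D^2+1) * (r^2 / (8 * (D^2 + 1)))"
      using M by (intro mult_left_mono) auto
    also have "\<dots> = r^2/4"
    proof -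
      have h: "D^2 + 1 \<noteq> 0" by (smt (verit) zero_le_power2)
      show ?thesis using h by (simp add: field_simps)
    qed
    finally show ?thesis .
  qed
  define \<eta> where "\<eta> = r/4"
  have ev: "eventually (\<lambda>n. \<forall>j\<in>{..<M}. \<forall>t\<in>{0..T}. \<bar>F n t j - G t j\<bar> \<le> \<eta>) sequentially"
  proof (rule eventually_ball_finite)
    show "\<forall>j\<in>{..<M}. eventually (\<lambda>n. \<forall>t\<in>{0..T}. \<bar>F n t j - G t j\<bar> \<le> \<eta>) sequentially"
      using U[of \<eta>] r unfolding \<eta>_def eventually_sequentially by auto
  qed auto
  then obtain N0 where N0: "\<And>n. n \<ge> N0 \<Longrightarrow> \<forall>j<M. \<forall>t\<in>{0..T}. \<bar>F n t j - G t j\<bar> \<le> \<eta>"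
    unfolding eventually_sequentially by auto
  have bnd: "sqrt (2*\<eta>^2 + 2 * D^2 * (1/2)^M) < r"
  proof (rule real_less_lsqrt)
    show "2*\<eta>^2 + 2 * D^2 * (1/2)^M < r^2" 
    proof -
      have "2*\<eta>^2 = r^2/8" by (simp add: \<eta>_def power_divide)
      moreover have "0 < r^2" using r by simp
      ultimately show ?thesis using MD by linarith
    qed
  qed (use r in auto)
  show "\<exists>no. \<forall>n\<ge>no. norm (dZ T (F n) G - 0) < r"
  proof (intro exI[of _ N0] allI impI)
    fix n assume n: "n \<ge> N0"
    have w: "0 \<le> wnorm (F n t - G t) \<and> wnorm (F n t - G t) \<le> sqrt (2*\<eta>^2 + 2 * D^2 * (1/2)^M)"
      if t: "t \<in> {0..T}" for t
      by (rule wnorm_small) (use D[OF t] N0[OF n] t in auto)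
    have ne: "{0..T} \<noteq> {}" using T by auto
    have up: "dZ T (F n) G \<le> sqrt (2*\<eta>^2 + 2 * D^2 * (1/2)^M)"
      unfolding dZ_def by (rule cSUP_least[OF ne]) (use w in auto)
    have lo: "0 \<le> dZ T (F n) G"
      unfolding dZ_def
    proof (rule cSUP_upper2[of _ _ 0])
      show "bdd_above ((\<lambda>t. wnorm (F n t - G t)) ` {0..T})"
        using w by (intro bdd_aboveI2) auto
    qed (use T w in auto)
    show "norm (dZ T (F n) G - 0) < r" using up lo bnd by simp
  qed
qed



lemma tri3: "\<bar>a - c\<bar> \<le> \<bar>a - b\<bar> + \<bar>b - (c::real)\<bar>" by arith

definition cmp :: "nat \<Rightarrow> state \<Rightarrow> seq" where
  "cmp k x = (if k = 0 then Vc x else if k = 1 then Ac x else if k = 2 then Lc x else Cc x)"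

lemma ev_bnds:
  "0 \<le> arr_ev lam N u V i" "arr_ev lam N u V i \<le> 1 / real N"
  "0 \<le> loc_ev lam p N u V i" "loc_ev lam p N u V i \<le> 1 / real N"
  "0 \<le> cen_ev lam p N u V i" "cen_ev lam p N u V i \<le> 1 / real N"
  by (auto simp: arr_ev_def loc_ev_def cen_ev_def)

lemma step_inv:
  "Vc (step lam p N u x) 0 = Vc (step lam p N u x) 1 + 1"
  by (cases x) (auto simp: step_def Let_def Vc_def)

lemma step_comp:
  assumes inv: "Vc x 0 = Vc x 1 + 1"
  shows "\<bar>cmp k (step lam p N u x) j - cmp k x j\<bar> \<le> 3 / real N"
proof -
  obtain V A L C where x: "x = (V, A, L, C)" by (cases x) auto
  let ?a = "arr_ev lam N u V" and ?l = "loc_ev lam p N u V" and ?c = "cen_ev lam p N u V"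
  have b: "\<And>i. 0 \<le> ?a i" "\<And>i. ?a i \<le> 1 / real N" "\<And>i. 0 \<le> ?l i" "\<And>i. ?l i \<le> 1 / real N"
    "\<And>i. 0 \<le> ?c i" "\<And>i. ?c i \<le> 1 / real N" by (rule ev_bnds)+
  have V0: "V 0 = V 1 + 1" using inv x by (simp add: Vc_def)
  have sV: "Vc (step lam p N u x) j = (if j = 0 then V 1 + ?a 1 - ?l 1 - ?c 1 + 1 else V j + ?a j - ?l j - ?c j)"
    by (simp add: x step_def Let_def Vc_def)
  have sA: "Ac (step lam p N u x) j = A j + ?a j" by (simp add: x step_def Let_def Ac_def)
  have sL: "Lc (step lam p N u x) j = L j + ?l j" by (simp add: x step_def Let_def Lc_def)
  have sC: "Cc (step lam p N u x) j = C j + ?c j" by (simp add: x step_def Let_def Cc_def)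
  have N0: "0 \<le> 1 / real N" by simp
  show ?thesis
  proof (cases "k = 0")
    case True
    have "cmp k (step lam p N u x) j - cmp k x j = Vc (step lam p N u x) j - V j"
      using True by (simp add: cmp_def x Vc_def)
    then show ?thesis using b[of 1] b[of j] V0 unfolding sV
      by (auto simp: abs_le_iff split: if_splits)
  next
    case False
    have "cmp k (step lam p N u x) j - cmp k x j = (if k = 1 then ?a j else if k = 2 then ?l j else ?c j)"
      using False sA sL sC by (simp add: cmp_def x Ac_def Lc_def Cc_def)
    then show ?thesis using b[of j] N0
      by (auto simp: abs_le_iff)
  qed
qed

lemma chain_inv:
  assumes "V0 0 = V0 1 + 1"
  shows "Vc (chain lam p N V0 U m) 0 = Vc (chain lam p N V0 U m) 1 + 1"
proof (cases m)
  case 0 then show ?thesis using assms by (simp add: Vc_def)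
next
  case (Suc n) then show ?thesis using step_inv by simp
qed

lemma chain_lip_aux:
  assumes "V0 0 = V0 1 + 1"
  shows "\<bar>cmp k (chain lam p N V0 U (m + d)) j - cmp k (chain lam p N V0 U m) j\<bar> \<le> 3 * real d / real N"
proof (induction d)
  case 0 then show ?case by simp
next
  case (Suc d)
  have "\<bar>cmp k (chain lam p N V0 U (m + Suc d)) j - cmp k (chain lam p N V0 U (m + d)) j\<bar> \<le> 3 / real N"
    using step_comp[OF chain_inv[OF assms]] by simp
  moreover have "3 * real (Suc d) / real N = 3 / real N + 3 * real d / real N"
    by (simp add: add_divide_distrib[symmetric] algebra_simps)
  moreover have "\<bar>cmp k (chain lam p N V0 U (m + Suc d)) j - cmp k (chain lam p N V0 U m) j\<bar> \<le>
     \<bar>cmp k (chain lam p N V0 U (m + Suc d)) j - cmp k (chain lam p N V0 U (m + d)) j\<bar> +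
     \<bar>cmp k (chain lam p N V0 U (m + d)) j - cmp k (chain lam p N V0 U m) j\<bar>" by (rule tri3)
  ultimately show ?case using Suc by linarith
qed

lemma chain_lip:
  assumes "V0 0 = V0 1 + 1"
  shows "\<bar>cmp k (chain lam p N V0 U m) j - cmp k (chain lam p N V0 U m') j\<bar> \<le> 3 * \<bar>real m - real m'\<bar> / real N"
proof (cases "m' \<le> m")
  case True
  then show ?thesis using chain_lip_aux[OF assms, where k=k and m=m' and d="m - m'" and j=j and lam=lam and p=p and N=N and U=U] by (simp add: of_nat_diff)
next
  case False
  then show ?thesis using chain_lip_aux[OF assms, where k=k and m=m and d="m' - m" and j=j and lam=lam and p=p and N=N and U=U] by (simp add: of_nat_diff abs_minus_commute)
qed

lemma chain0_comp:
  "cmp k (chain lam p N V0 U 0) j = (if k = 0 then V0 j else 0)"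
  by (simp add: cmp_def Vc_def Ac_def Lc_def Cc_def)



lemma Vbar_props:
  assumes "v \<in> Vbar_inf"
  shows "v 0 = v 1 + 1" "\<And>i. 0 \<le> v i" "\<And>i. v i \<le> v 0"
proof -
  obtain s where s: "s \<in> Sbar_inf" and vs: "\<And>i. v i = (\<Sum>j. s (j + i))"
    using assms unfolding Vbar_inf_def by auto
  have s0: "s 0 = 1" and snn: "\<And>i. 0 \<le> s i" and sS: "summable (\<lambda>i. s (Suc i))"
    using s by (auto simp: Sbar_inf_def Sset_def)
  have sums: "summable (\<lambda>j. s (j + i))" for i
    using sS by (simp add: summable_Suc_iff summable_iff_shift)
  have vS: "v (Suc i) = v i - s i" for i
  proof -
    have "v (Suc i) = (\<Sum>j. s (Suc j + i))" by (simp add: vs)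
    also have "\<dots> = (\<Sum>j. s (j + i)) - s (0 + i)"
      using suminf_split_head[OF sums[of i]] by simp
    finally show ?thesis by (simp add: vs)
  qed
  show "v 0 = v 1 + 1" using vS[of 0] s0 by simp
  show "0 \<le> v i" for i unfolding vs by (rule suminf_nonneg[OF sums]) (use snn in auto)
  show "v i \<le> v 0" for i
  proof (induction i)
    case (Suc i) then show ?case using vS[of i] snn[of i] by simp
  qed simp
qed

lemma coord_le_wnorm:
  fixes x :: seq
  assumes D: "\<And>i. \<bar>x i\<bar> \<le> D"
  shows "\<bar>x j\<bar> \<le> sqrt (2^j) * wnorm x"
proof -
  define f where "f i = (1/2::real) ^ i * (x i)\<^sup>2" for i
  have f0: "0 \<le> f i" for i by (simp add: f_def)
  have geo: "(\<lambda>i. (1/2::real)^i) sums 2"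
    using geometric_sums[of "1/2::real"] by simp
  have fD: "f i \<le> D^2 * (1/2)^i" for i
  proof -
    have "(x i)\<^sup>2 \<le> D\<^sup>2" using D[of i] by (metis abs_le_square_iff abs_of_nonneg abs_ge_zero order_trans)
    then show ?thesis unfolding f_def by (simp add: mult.commute)
  qed
  have sD: "summable (\<lambda>i. D^2 * (1/2::real)^i)" using geo by (intro summable_mult) (auto simp: sums_iff)
  have sf: "summable f"
    by (rule summable_comparison_test[OF _ sD]) (use f0 fD in auto)
  have "sum f {j} \<le> suminf f" by (rule sum_le_suminf[OF sf]) (use f0 in auto)
  then have fj: "f j \<le> suminf f" by simp
  have sn: "0 \<le> suminf f" using sf f0 by (rule suminf_nonneg)
  have w2: "(wnorm x)^2 = suminf f" unfolding wnorm_def f_def[symmetric] using sn by simp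
  have "(x j)^2 = 2^j * f j" by (simp add: f_def power_one_over)
  also have "\<dots> \<le> 2^j * (wnorm x)^2" using fj w2 by (intro mult_left_mono) auto
  finally have "sqrt ((x j)^2) \<le> sqrt (2^j * (wnorm x)^2)" by (rule real_sqrt_le_mono)
  moreover have "wnorm x \<ge> 0" by (simp add: wnorm_def sn f_def[symmetric])
  ultimately show ?thesis by (simp add: real_sqrt_mult)
qed

definition cnt :: "(nat \<Rightarrow> real) \<Rightarrow> real \<Rightarrow> nat" where
  "cnt tau s = card {k. 1 \<le> k \<and> tau k \<le> s}"

lemma jt_finite:
  assumes "jump_times tau" shows "finite {k. 1 \<le> k \<and> tau k \<le> s}"
proof -
  have "filterlim tau at_top sequentially" using assms by (simp add: jump_times_def)
  then have "eventually (\<lambda>k. tau k \<ge> s + 1) sequentially" by (simp add: filterlim_at_top)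
  then obtain K where K: "\<And>k. k \<ge> K \<Longrightarrow> tau k \<ge> s + 1" by (auto simp: eventually_sequentially)
  have "{k. 1 \<le> k \<and> tau k \<le> s} \<subseteq> {..<K}"
  proof
    fix k assume "k \<in> {k. 1 \<le> k \<and> tau k \<le> s}"
    then show "k \<in> {..<K}" using K[of k] by (cases "k \<ge> K") auto
  qed
  then show ?thesis by (rule finite_subset) auto
qed

lemma cnt_mono:
  assumes "jump_times tau" "s \<le> s'" shows "cnt tau s \<le> cnt tau s'"
  unfolding cnt_def by (rule card_mono[OF jt_finite[OF assms(1)]]) (use assms(2) in auto)

lemma cnt_nonpos:
  assumes "jump_times tau" "s \<le> 0" shows "cnt tau s = 0"
proof -
  have "{k. 1 \<le> k \<and> tau k \<le> s} = {}"
    using assms unfolding jump_times_def by force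
  then show ?thesis unfolding cnt_def by (metis card.empty)
qed

lemma XN_cnt: "XN lam p tau U V0 N t = chain lam p N (V0 N) U (cnt tau (real N * t))"
  by (simp add: XN_def cnt_def)

lemma WN_cnt: "WN tau N t = real (cnt tau (real N * t)) / real N"
  by (simp add: WN_def Wpath_def cnt_def)



lemma helper3: "\<bar>a - p\<bar> \<le> e \<Longrightarrow> \<bar>b - q\<bar> \<le> e \<Longrightarrow> 3*\<bar>a - b\<bar> \<le> 3*(\<bar>p - q\<bar> + 2*(e::real))"
proof -
  assume h: "\<bar>a - p\<bar> \<le> e" "\<bar>b - q\<bar> \<le> e"
  have "\<bar>a - b\<bar> \<le> \<bar>a - p\<bar> + \<bar>p - q\<bar> + \<bar>q - b\<bar>"
    using abs_triangle_ineq[of "a - p" "p - b"] abs_triangle_ineq[of "p - q" "q - b"] by simp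
  also have "\<dots> \<le> \<bar>p - q\<bar> + 2*e" using h by (simp add: abs_minus_commute)
  finally show ?thesis by simp
qed

lemma main_lemma:
  fixes lam p T :: real and tau :: "'w \<Rightarrow> nat \<Rightarrow> real" and U :: "'u \<Rightarrow> nat \<Rightarrow> real"
    and V0 :: "'z \<Rightarrow> nat \<Rightarrow> seq" and v0 :: seq
  assumes lam: "0 \<le> lam" and T: "T > 0"
    and jt: "\<forall>w. jump_times (tau w)"
    and V0: "\<forall>z N. 1 \<le> N \<longrightarrow> V0 z N \<in> Vbar_inf"
    and v0: "v0 \<in> Vbar_inf"
    and init: "\<forall>\<omega>\<in>Cset lam T tau U. (\<lambda>N. wnorm (Vc (Xproc lam p tau U V0 \<omega> N 0) - v0)) \<longlonglongrightarrow> 0"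
    and om: "\<omega> \<in> Cset lam T tau U" and r: "strict_mono r"
  shows "\<exists>(s::nat \<Rightarrow> nat) (v::real \<Rightarrow> seq) (a::real \<Rightarrow> seq) (l::real \<Rightarrow> seq) (c::real \<Rightarrow> seq).
          strict_mono s \<and>
          (\<lambda>i. dZ T (\<lambda>t. Vc (Xproc lam p tau U V0 \<omega> (Suc (r (s i))) t)) v) \<longlonglongrightarrow> 0 \<and>
          (\<lambda>i. dZ T (\<lambda>t. Ac (Xproc lam p tau U V0 \<omega> (Suc (r (s i))) t)) a) \<longlonglongrightarrow> 0 \<and>
          (\<lambda>i. dZ T (\<lambda>t. Lc (Xproc lam p tau U V0 \<omega> (Suc (r (s i))) t)) l) \<longlonglongrightarrow> 0 \<and>
          (\<lambda>i. dZ T (\<lambda>t. Cc (Xproc lam p tau U V0 \<omega> (Suc (r (s i))) t)) c) \<longlonglongrightarrow> 0 \<and>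
          v 0 = v0 \<and> a 0 = (\<lambda>_. 0) \<and> l 0 = (\<lambda>_. 0) \<and> c 0 = (\<lambda>_. 0) \<and>
          (\<forall>j. \<forall>x\<in>{0..T}. \<forall>y\<in>{0..T}.
             \<bar>v x j - v y j\<bar> \<le> (3*(1+lam)) * \<bar>x - y\<bar> \<and> \<bar>a x j - a y j\<bar> \<le> (3*(1+lam)) * \<bar>x - y\<bar> \<and>
             \<bar>l x j - l y j\<bar> \<le> (3*(1+lam)) * \<bar>x - y\<bar> \<and> \<bar>c x j - c y j\<bar> \<le> (3*(1+lam)) * \<bar>x - y\<bar>)"
proof -
  obtain w u z where om_eq: "\<omega> = (w, u, z)" by (cases \<omega>) auto
  define E where "E N = (SUP t\<in>{0..T}. \<bar>WN (tau w) N t - (1 + lam) * t\<bar>)" for N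
  have Econv: "E \<longlonglongrightarrow> 0" using om unfolding E_def[abs_def] by (simp add: Cset_def om_eq)
  have jtw: "jump_times (tau w)" using jt by auto
  have Xeq: "Xproc lam p tau U V0 \<omega> N t = chain lam p N (V0 z N) (U u) (cnt (tau w) (real N * t))" for N t
    by (simp add: Xproc_def om_eq XN_cnt)
  have X0: "Xproc lam p tau U V0 \<omega> N 0 = chain lam p N (V0 z N) (U u) 0" for N
    using cnt_nonpos[OF jtw, of 0] by (simp add: Xeq)
  have initz: "(\<lambda>N. wnorm (V0 z N - v0)) \<longlonglongrightarrow> 0"
  proof -
    have "(\<lambda>N. wnorm (Vc (Xproc lam p tau U V0 \<omega> N 0) - v0)) \<longlonglongrightarrow> 0" using init om by blast
    then show ?thesis unfolding X0 by (simp add: Vc_def)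
  qed
  have v0p: "v0 0 = v0 1 + 1" "\<And>i. 0 \<le> v0 i" "\<And>i. v0 i \<le> v0 0" using Vbar_props[OF v0] by auto
  have V0p: "V0 z N 0 = V0 z N 1 + 1" "\<And>i. 0 \<le> V0 z N i" "\<And>i. V0 z N i \<le> V0 z N 0" if "1 \<le> N" for N
    using Vbar_props[of "V0 z N"] V0 that by auto
  have diffb: "\<bar>(V0 z N - v0) i\<bar> \<le> V0 z N 0 + v0 0" if "1 \<le> N" for N i
  proof -
    have "0 \<le> V0 z N i" "V0 z N i \<le> V0 z N 0" "0 \<le> v0 i" "v0 i \<le> v0 0"
      using V0p(2,3)[OF that] v0p(2,3) by auto
    then show ?thesis by (simp add: abs_le_iff)
  qed
  have WNnn: "0 \<le> WN (tau w) N t" for N t by (simp add: WN_cnt)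
  have WNmono: "WN (tau w) N t \<le> WN (tau w) N T" if "t \<le> T" for N t
  proof -
    have "real N * t \<le> real N * T" using that by (intro mult_left_mono) auto
    then have "cnt (tau w) (real N * t) \<le> cnt (tau w) (real N * T)" by (rule cnt_mono[OF jtw])
    then show ?thesis unfolding WN_cnt by (intro divide_right_mono) auto
  qed
  have Ebound: "\<bar>WN (tau w) N t - (1 + lam) * t\<bar> \<le> E N" if t: "t \<in> {0..T}" for N t
    unfolding E_def
  proof (rule cSUP_upper[OF t])
    show "bdd_above ((\<lambda>t. \<bar>WN (tau w) N t - (1 + lam) * t\<bar>) ` {0..T})"
    proof (rule bdd_aboveI2)
      fix t assume t: "t \<in> {0..T}"
      have "0 \<le> (1+lam) * t" "(1+lam) * t \<le> (1+lam) * T" using t lam by (auto intro: mult_left_mono)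
      then show "\<bar>WN (tau w) N t - (1 + lam) * t\<bar> \<le> WN (tau w) N T + (1+lam)*T"
        using WNnn[of N t] WNmono[of t N] t by (auto simp: abs_le_iff)
    qed
  qed
  define K where "K = 3 * (1 + lam)"
  have Klip: "\<bar>cmp k (Xproc lam p tau U V0 \<omega> N x) j - cmp k (Xproc lam p tau U V0 \<omega> N y) j\<bar>
              \<le> K * \<bar>x - y\<bar> + 6 * E N" if N: "1 \<le> N" and x: "x \<in> {0..T}" and y: "y \<in> {0..T}" for N k j x y
  proof -
    let ?cx = "cnt (tau w) (real N * x)" and ?cy = "cnt (tau w) (real N * y)"
    have "\<bar>cmp k (Xproc lam p tau U V0 \<omega> N x) j - cmp k (Xproc lam p tau U V0 \<omega> N y) j\<bar>
          \<le> 3 * \<bar>real ?cx - real ?cy\<bar> / real N"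
      unfolding Xeq by (rule chain_lip[OF V0p(1)[OF N]])
    also have "\<dots> = 3 * \<bar>WN (tau w) N x - WN (tau w) N y\<bar>"
      using N by (simp add: WN_cnt diff_divide_distrib[symmetric] abs_divide)
    also have "\<dots> \<le> 3 * (\<bar>(1+lam) * x - (1+lam) * y\<bar> + 2 * E N)"
      by (rule helper3[OF Ebound[OF x, of N] Ebound[OF y, of N]])
    also have "\<dots> = K * \<bar>x - y\<bar> + 6 * E N"
    proof -
      have "(1+lam)*x - (1+lam)*y = (1+lam)*(x-y)" by (simp add: algebra_simps)
      then have "\<bar>(1+lam)*x - (1+lam)*y\<bar> = (1+lam)*\<bar>x-y\<bar>" using lam by (simp add: abs_mult)
      then show ?thesis by (simp add: K_def)
    qed
    finally show ?thesis .
  qed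
  obtain Bw where Bw: "\<And>N. \<bar>wnorm (V0 z N - v0)\<bar> \<le> Bw"
  proof -
    have "Bseq (\<lambda>N. wnorm (V0 z N - v0))" using initz by (intro convergent_imp_Bseq) (auto simp: convergent_def)
    then show ?thesis using that by (metis BseqE real_norm_def)
  qed
  obtain BE where BE: "\<And>N. \<bar>E N\<bar> \<le> BE"
  proof -
    have "Bseq E" using Econv by (intro convergent_imp_Bseq) (auto simp: convergent_def)
    then show ?thesis using that by (metis BseqE real_norm_def)
  qed
  define B where "B = v0 0 + Bw + 3 * ((1+lam)*T + BE)"
  have Kbnd: "\<bar>cmp k (Xproc lam p tau U V0 \<omega> N t) j\<bar> \<le> B" if N: "1 \<le> N" and t: "t \<in> {0..T}" for N k j t
  proof -
    let ?m = "cnt (tau w) (real N * t)"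
    have c1: "\<bar>cmp k (Xproc lam p tau U V0 \<omega> N t) j - cmp k (chain lam p N (V0 z N) (U u) 0) j\<bar>
              \<le> 3 * \<bar>real ?m - real 0\<bar> / real N"
      unfolding Xeq by (rule chain_lip[OF V0p(1)[OF N]])
    have "3 * \<bar>real ?m - real 0\<bar> / real N = 3 * WN (tau w) N t" by (simp add: WN_cnt)
    also have "\<dots> \<le> 3 * WN (tau w) N T" using WNmono[of t N] t by auto
    also have "\<dots> \<le> 3 * ((1+lam)*T + BE)" using Ebound[of T N] BE[of N] T by (auto simp: abs_le_iff)
    finally have c2: "3 * \<bar>real ?m - real 0\<bar> / real N \<le> 3 * ((1+lam)*T + BE)" .
    have c3: "\<bar>cmp k (chain lam p N (V0 z N) (U u) 0) j\<bar> \<le> V0 z N 0"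
      unfolding chain0_comp using V0p(2,3)[OF N, of j] by auto
    have "\<bar>(V0 z N - v0) 0\<bar> \<le> sqrt (2^0) * wnorm (V0 z N - v0)"
      by (rule coord_le_wnorm[OF diffb[OF N]])
    then have c4: "V0 z N 0 \<le> v0 0 + Bw" using Bw[of N] by (auto simp: abs_le_iff)
    show ?thesis using c1 c2 c3 c4 unfolding B_def by linarith
  qed
  define H where "H n m t = cmp (m mod 4) (Xproc lam p tau U V0 \<omega> (Suc (r n)) t) (m div 4)" for n m t
  have Hb: "\<bar>H n m t\<bar> \<le> B" if "t \<in> {0..T}" for n m t unfolding H_def by (rule Kbnd) (use that in auto)
  have Hl: "\<bar>H n m x - H n m y\<bar> \<le> K * \<bar>x - y\<bar> + 6 * E (Suc (r n))" if "x \<in> {0..T}" "y \<in> {0..T}" for n m x y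
    unfolding H_def by (rule Klip) (use that in auto)
  have smr: "strict_mono (\<lambda>n. Suc (r n))" using r by (auto simp: strict_mono_def)
  define xx where "xx i n = (case (from_nat i :: nat \<times> nat \<times> nat) of (m, M, k) \<Rightarrow> H n m (min T (real k * T / real (Suc M))))" for i n
  have "\<exists>s. strict_mono s \<and> (\<forall>i. convergent (\<lambda>n. xx i (s n)))"
  proof (rule diag_bounded)
    fix i
    show "\<exists>B. \<forall>n. \<bar>xx i n\<bar> \<le> B"
    proof (intro exI[of _ B] allI)
      fix n
      obtain m M k where fi: "(from_nat i :: nat \<times> nat \<times> nat) = (m, M, k)" by (metis prod.exhaust)
      have "min T (real k * T / real (Suc M)) \<in> {0..T}" using T by auto
      then show "\<bar>xx i n\<bar> \<le> B" unfolding xx_def fi by (simp add: Hb)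
    qed
  qed
  then obtain s where s: "strict_mono s" and sconv: "\<And>i. convergent (\<lambda>n. xx i (s n))" by blast
  have "\<exists>g. (\<forall>t\<in>{0..T}. (\<lambda>n. H (s n) m t) \<longlonglongrightarrow> g t) \<and>
             (\<forall>\<epsilon>>0. \<exists>N0. \<forall>n\<ge>N0. \<forall>t\<in>{0..T}. \<bar>H (s n) m t - g t\<bar> \<le> \<epsilon>) \<and>
             (\<forall>x\<in>{0..T}. \<forall>y\<in>{0..T}. \<bar>g x - g y\<bar> \<le> K*\<bar>x-y\<bar>)" for m
  proof (rule unif_from_grid[where e = "\<lambda>n. 6 * E (Suc (r (s n)))"])
    show "0 < T" by (rule T)
    show "0 \<le> K" using lam by (simp add: K_def)
    have "(E \<circ> ((\<lambda>n. Suc (r n)) \<circ> s)) \<longlonglongrightarrow> 0"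
      by (rule LIMSEQ_subseq_LIMSEQ[OF Econv strict_mono_o[OF smr s]])
    then show "(\<lambda>n. 6 * E (Suc (r (s n)))) \<longlonglongrightarrow> 0"
      using tendsto_mult[OF tendsto_const, of _ 0 sequentially 6] by (simp add: o_def)
    show "\<bar>H (s n) m x - H (s n) m y\<bar> \<le> K * \<bar>x - y\<bar> + 6 * E (Suc (r (s n)))"
      if "x \<in> {0..T}" "y \<in> {0..T}" for n x y using Hl[OF that] .
    show "convergent (\<lambda>n. H (s n) m (real k * T / real (Suc M)))" if k: "k \<le> Suc M" for M k
    proof -
      have le: "real k * T / real (Suc M) \<le> T"
      proof -
        have "real k * T \<le> real (Suc M) * T" using k T by (intro mult_right_mono) auto
        then show ?thesis by (simp add: pos_divide_le_eq mult.commute)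
      qed
      have "xx (to_nat (m, M, k)) (s n) = H (s n) m (real k * T / real (Suc M))" for n
        using le by (simp add: xx_def)
      then show ?thesis using sconv[of "to_nat (m, M, k)"] by simp
    qed
  qed
  then obtain G where G: "\<And>m. (\<forall>t\<in>{0..T}. (\<lambda>n. H (s n) m t) \<longlonglongrightarrow> G m t) \<and>
             (\<forall>\<epsilon>>0. \<exists>N0. \<forall>n\<ge>N0. \<forall>t\<in>{0..T}. \<bar>H (s n) m t - G m t\<bar> \<le> \<epsilon>) \<and>
             (\<forall>x\<in>{0..T}. \<forall>y\<in>{0..T}. \<bar>G m x - G m y\<bar> \<le> K*\<bar>x-y\<bar>)"
    by metis
  have Gb: "\<bar>G m t\<bar> \<le> B" if t: "t \<in> {0..T}" for m t
  proof -
    have "(\<lambda>n. \<bar>H (s n) m t\<bar>) \<longlonglongrightarrow> \<bar>G m t\<bar>" using G t by (intro tendsto_intros) auto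
    then show ?thesis by (rule LIMSEQ_le_const2) (use Hb t in auto)
  qed
  have Hk: "H n (4 * j + k) t = cmp k (Xproc lam p tau U V0 \<omega> (Suc (r n)) t) j" if "k < 4" for n j k t
    using that by (simp add: H_def)
  define v where "v t j = G (4 * j) t" for t j
  define a where "a t j = G (4 * j + 1) t" for t j
  define l where "l t j = G (4 * j + 2) t" for t j
  define c where "c t j = G (4 * j + 3) t" for t j
  have conv_k: "(\<lambda>i. dZ T (\<lambda>t. cmp k (Xproc lam p tau U V0 \<omega> (Suc (r (s i))) t)) (\<lambda>t j. G (4 * j + k) t)) \<longlonglongrightarrow> 0"
    if k: "k < 4" for k
  proof (rule dZ_tendsto[where D = "2 * B"])
    show "0 \<le> T" using T by simp
    show "\<bar>cmp k (Xproc lam p tau U V0 \<omega> (Suc (r (s n))) t) j - G (4 * j + k) t\<bar> \<le> 2 * B"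
      if t: "t \<in> {0..T}" for n t j
      using Hb[OF t, of "s n" "4*j+k"] Gb[OF t, of "4*j+k"] Hk[OF k] by (auto simp: abs_le_iff)
    show "\<exists>N0. \<forall>n\<ge>N0. \<forall>t\<in>{0..T}. \<bar>cmp k (Xproc lam p tau U V0 \<omega> (Suc (r (s n))) t) j - G (4 * j + k) t\<bar> \<le> \<epsilon>"
      if "\<epsilon> > 0" for j \<epsilon>
      using G[of "4*j+k"] that Hk[OF k] by metis
  qed
  have cmp_simps: "cmp 0 = Vc" "cmp 1 = Ac" "cmp 2 = Lc" "cmp 3 = Cc" by (auto simp: cmp_def fun_eq_iff)
  have G0: "(\<lambda>n. H (s n) m 0) \<longlonglongrightarrow> G m 0" for m using G[of m] T by auto
  have coordconv: "(\<lambda>N. V0 z N j - v0 j) \<longlonglongrightarrow> 0" for j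
  proof (rule Lim_null_comparison)
    show "eventually (\<lambda>N. norm (V0 z N j - v0 j) \<le> sqrt (2^j) * wnorm (V0 z N - v0)) sequentially"
      unfolding eventually_sequentially
    proof (intro exI[of _ 1] allI impI)
      fix N :: nat assume N: "N \<ge> 1"
      have "\<bar>(V0 z N - v0) j\<bar> \<le> sqrt (2^j) * wnorm (V0 z N - v0)"
        by (rule coord_le_wnorm[OF diffb[OF N]])
      then show "norm (V0 z N j - v0 j) \<le> sqrt (2^j) * wnorm (V0 z N - v0)" by simp
    qed
    show "(\<lambda>N. sqrt (2^j) * wnorm (V0 z N - v0)) \<longlonglongrightarrow> 0"
      using tendsto_mult[OF tendsto_const initz, of "sqrt (2^j)"] by simp
  qed
  have "v 0 j = v0 j" for j
  proof -
    have "((\<lambda>N. V0 z N j - v0 j) \<circ> ((\<lambda>n. Suc (r n)) \<circ> s)) \<longlonglongrightarrow> 0"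
      by (rule LIMSEQ_subseq_LIMSEQ[OF coordconv strict_mono_o[OF smr s]])
    then have "(\<lambda>n. V0 z (Suc (r (s n))) j - v0 j + v0 j) \<longlonglongrightarrow> 0 + v0 j"
      by (intro tendsto_intros) (simp add: o_def)
    moreover have "H (s n) (4 * j) 0 = V0 z (Suc (r (s n))) j" for n
      using Hk[of 0 "s n" j 0] by (simp add: X0 cmp_def Vc_def Ac_def Lc_def Cc_def)
    ultimately have "(\<lambda>n. H (s n) (4 * j) 0) \<longlonglongrightarrow> v0 j" by simp
    then show ?thesis using G0[of "4*j"] unfolding v_def by (metis LIMSEQ_unique)
  qed
  then have v00: "v 0 = v0" by auto
  have zero0: "G (4 * j + k) 0 = 0" if "k < 4" "k \<noteq> 0" for j k
  proof -
    have "H (s n) (4 * j + k) 0 = 0" for n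
      using Hk[of k "s n" j 0] that by (simp add: X0 cmp_def Vc_def Ac_def Lc_def Cc_def)
    then have "(\<lambda>n. H (s n) (4 * j + k) 0) \<longlonglongrightarrow> 0" by simp
    then show ?thesis using G0[of "4*j+k"] by (metis LIMSEQ_unique)
  qed
  have a0: "a 0 = (\<lambda>_. 0)" "l 0 = (\<lambda>_. 0)" "c 0 = (\<lambda>_. 0)"
    using zero0[of 1] zero0[of 2] zero0[of 3] by (auto simp: a_def l_def c_def fun_eq_iff)
  have lips: "\<bar>G m x - G m y\<bar> \<le> K*\<bar>x-y\<bar>" if "x \<in> {0..T}" "y \<in> {0..T}" for m x y
    using G[of m] that by blast
  have cv: "(\<lambda>i. dZ T (\<lambda>t. Vc (Xproc lam p tau U V0 \<omega> (Suc (r (s i))) t)) v) \<longlonglongrightarrow> 0"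
    using conv_k[of 0] unfolding cmp_simps by (simp add: v_def[abs_def])
  have ca: "(\<lambda>i. dZ T (\<lambda>t. Ac (Xproc lam p tau U V0 \<omega> (Suc (r (s i))) t)) a) \<longlonglongrightarrow> 0"
    using conv_k[of 1] unfolding cmp_simps by (simp add: a_def[abs_def])
  have cl: "(\<lambda>i. dZ T (\<lambda>t. Lc (Xproc lam p tau U V0 \<omega> (Suc (r (s i))) t)) l) \<longlonglongrightarrow> 0"
    using conv_k[of 2] unfolding cmp_simps by (simp add: l_def[abs_def])
  have cc: "(\<lambda>i. dZ T (\<lambda>t. Cc (Xproc lam p tau U V0 \<omega> (Suc (r (s i))) t)) c) \<longlonglongrightarrow> 0"
    using conv_k[of 3] unfolding cmp_simps by (simp add: c_def[abs_def])
  show ?thesis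
    apply (rule exI[of _ s], rule exI[of _ v], rule exI[of _ a], rule exI[of _ l], rule exI[of _ c])
    using s cv ca cl cc v00 a0 lips unfolding K_def v_def a_def l_def c_def by auto
qed

theorem proposition1:
  fixes lam p :: real
  assumes "0 \<le> lam" "lam < 1" "0 \<le> p" "p \<le> 1"
  shows "\<exists>L>0. \<forall>T>0. \<forall>(tau :: 'w \<Rightarrow> nat \<Rightarrow> real) (U :: 'u \<Rightarrow> nat \<Rightarrow> real)
            (V0 :: 'z \<Rightarrow> nat \<Rightarrow> seq) (v0 :: seq).
    ((\<forall>w. jump_times (tau w)) \<and>
     (\<forall>u k. 1 \<le> k \<longrightarrow> 0 \<le> U u k \<and> U u k \<le> 1) \<and>
     (\<forall>z N. 1 \<le> N \<longrightarrow> V0 z N \<in> Vbar_inf \<and> (\<forall>i. \<exists>m::int. V0 z N i = real_of_int m / real N)) \<and>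
     v0 \<in> Vbar_inf \<and>
     (\<forall>\<omega>\<in>Cset lam T tau U.
        (\<lambda>N. wnorm (Vc (Xproc lam p tau U V0 \<omega> N 0) - v0)) \<longlonglongrightarrow> 0))
    \<longrightarrow>
    (\<forall>\<omega>\<in>Cset lam T tau U. \<forall>r::nat \<Rightarrow> nat. strict_mono r \<longrightarrow>
       (\<exists>(s::nat \<Rightarrow> nat) (v::real \<Rightarrow> seq) (a::real \<Rightarrow> seq) (l::real \<Rightarrow> seq) (c::real \<Rightarrow> seq).
          strict_mono s \<and>
          (\<lambda>i. dZ T (\<lambda>t. Vc (Xproc lam p tau U V0 \<omega> (Suc (r (s i))) t)) v) \<longlonglongrightarrow> 0 \<and>
          (\<lambda>i. dZ T (\<lambda>t. Ac (Xproc lam p tau U V0 \<omega> (Suc (r (s i))) t)) a) \<longlonglongrightarrow> 0 \<and>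
          (\<lambda>i. dZ T (\<lambda>t. Lc (Xproc lam p tau U V0 \<omega> (Suc (r (s i))) t)) l) \<longlonglongrightarrow> 0 \<and>
          (\<lambda>i. dZ T (\<lambda>t. Cc (Xproc lam p tau U V0 \<omega> (Suc (r (s i))) t)) c) \<longlonglongrightarrow> 0 \<and>
          v 0 = v0 \<and> a 0 = (\<lambda>_. 0) \<and> l 0 = (\<lambda>_. 0) \<and> c 0 = (\<lambda>_. 0) \<and>
          (\<forall>j. \<forall>x\<in>{0..T}. \<forall>y\<in>{0..T}.
             \<bar>v x j - v y j\<bar> \<le> L * \<bar>x - y\<bar> \<and> \<bar>a x j - a y j\<bar> \<le> L * \<bar>x - y\<bar> \<and>
             \<bar>l x j - l y j\<bar> \<le> L * \<bar>x - y\<bar> \<and> \<bar>c x j - c y j\<bar> \<le> L * \<bar>x - y\<bar>)))"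
    using assms
  apply (intro exI[of _ "3*(1+lam)"] conjI allI impI ballI)
   apply simp
  apply (rule main_lemma)
         apply auto
  done

end
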